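(* For every context $E$ and $\lambda\mu\mathrm{T}$-terms $r,s$ and $n\in\mathbb{N}$: (1) if $E[r]\in\mathrm{SN}_A$ and $s\in\mathrm{SN}_A$, then $E[\mathsf{nrec}\ r\ s\ 0]\in\mathrm{SN}_A$; (2) if $E[s\ \underline{n}\ (\mathsf{nrec}\ r\ s\ \underline{n})]\in\mathrm{SN}_A$, then $E[\mathsf{nrec}\ r\ s\ (\mathsf{S}\,\underline{n})]\in\mathrm{SN}_A$.
   Context: The calculus $\lambda\mu\mathrm{T}$ (raw terms). Types: $\rho,\sigma,\tau ::= \mathbb{N} \mid \sigma\to\tau$. Over infinite sets of $\lambda$-variables $x,y,\dots$ and $\mu$-variables $\alpha,\beta,\gamma,\dots$, terms and commands are mutually defined by $t,r,s ::= x \mid \lambda x{:}\rho.r \mid t\,s \mid \mu\alpha{:}\rho.c \mid 0 \mid \mathsf{S}\,t \mid \mathsf{nrec}_\rho\ r\ s\ t$ and $c ::= [\alpha]t$. Terms are considered modulo renaming of bound variables; $t[x:=r]$ is capture-avoiding substitution. Numerals: $\underline{n} := \mathsf{S}^n 0$. Contexts: $E ::= \Box \mid E\,t \mid \mathsf{S}\,E \mid \mathsf{nrec}\ r\ s\ E$; $E[u]$ fills the hole with $u$. Structural substitution $t[\alpha:=\beta E]$ is homomorphic on all constructs (capture-avoiding) except $([\alpha]u)[\alpha:=\beta E] := [\beta]E[u[\alpha:=\beta E]]$ (and $([\gamma]u)[\alpha:=\beta E]:=[\gamma](u[\alpha:=\beta E])$ for $\gamma\neq\alpha$). $\to_A$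 is the compatible closure (on terms and commands) of: $(\lambda x.t)r\to t[x:=r]$; $\mathsf{S}(\mu\alpha.c)\to\mu\alpha.c[\alpha:=\alpha(\mathsf{S}\,\Box)]$; $(\mu\alpha.c)s\to\mu\alpha.c[\alpha:=\alpha(\Box\,s)]$; $\mathsf{nrec}\ r\ s\ 0\to r$; $\mathsf{nrec}\ r\ s\ (\mathsf{S}\,\underline{n})\to s\ \underline{n}\ (\mathsf{nrec}\ r\ s\ \underline{n})$; $\mathsf{nrec}\ r\ s\ (\mu\alpha.c)\to\mu\alpha.c[\alpha:=\alpha(\mathsf{nrec}\ r\ s\ \Box)]$. $\mathrm{SN}_A$ is defined inductively: $t\in\mathrm{SN}_A$ whenever every $t'$ with $t\to_A t'$ is in $\mathrm{SN}_A$. *)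

theory Defs
  imports Main
begin

text \<open>Terms modulo renaming of bound variables are represented with de Bruijn
indices, with two separate index spaces: one for lambda-variables (Var i) and one
for mu-variables (the index in a command Cmd i t).  Type annotations are kept
as in the paper but play no role in reduction.\<close>

datatype ty = N | Arr ty ty

datatype trm =
    Var nat
  | Lam ty trm
  | App trm trm
  | Mu ty cmd
  | Zero
  | Succ trm
  | Nrec ty trm trm trm
and cmd = Cmd nat trm

datatype ctx =
    Hole
  | CApp ctx trm
  | CSucc ctx
  | CNrec ty trm trm ctx

fun fill :: "ctx \<Rightarrow> trm \<Rightarrow> trm" where
  "fill Hole u = u"
| "fill (CApp E t) u = App (fill E u) t"
| "fill (CSucc E) u = Succ (fill E u)"
| "fill (CNrec \<rho> r s E) u = Nrec \<rho> r s (fill E u)"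

definition num :: "nat \<Rightarrow> trm" where
  "num n = (Succ ^^ n) Zero"

fun liftL :: "nat \<Rightarrow> trm \<Rightarrow> trm" and liftLC :: "nat \<Rightarrow> cmd \<Rightarrow> cmd" where
  "liftL k (Var i) = (if i < k then Var i else Var (Suc i))"
| "liftL k (Lam \<rho> t) = Lam \<rho> (liftL (Suc k) t)"
| "liftL k (App t u) = App (liftL k t) (liftL k u)"
| "liftL k (Mu \<rho> c) = Mu \<rho> (liftLC k c)"
| "liftL k Zero = Zero"
| "liftL k (Succ t) = Succ (liftL k t)"
| "liftL k (Nrec \<rho> r s t) = Nrec \<rho> (liftL k r) (liftL k s) (liftL k t)"
| "liftLC k (Cmd a t) = Cmd a (liftL k t)"

fun liftM :: "nat \<Rightarrow> trm \<Rightarrow> trm" and liftMC :: "nat \<Rightarrow> cmd \<Rightarrow> cmd" where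
  "liftM k (Var i) = Var i"
| "liftM k (Lam \<rho> t) = Lam \<rho> (liftM k t)"
| "liftM k (App t u) = App (liftM k t) (liftM k u)"
| "liftM k (Mu \<rho> c) = Mu \<rho> (liftMC (Suc k) c)"
| "liftM k Zero = Zero"
| "liftM k (Succ t) = Succ (liftM k t)"
| "liftM k (Nrec \<rho> r s t) = Nrec \<rho> (liftM k r) (liftM k s) (liftM k t)"
| "liftMC k (Cmd a t) = Cmd (if a < k then a else Suc a) (liftM k t)"

fun liftLctx :: "nat \<Rightarrow> ctx \<Rightarrow> ctx" where
  "liftLctx k Hole = Hole"
| "liftLctx k (CApp E t) = CApp (liftLctx k E) (liftL k t)"
| "liftLctx k (CSucc E) = CSucc (liftLctx k E)"
| "liftLctx k (CNrec \<rho> r s E) = CNrec \<rho> (liftL k r) (liftL k s) (liftLctx k E)"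

fun liftMctx :: "nat \<Rightarrow> ctx \<Rightarrow> ctx" where
  "liftMctx k Hole = Hole"
| "liftMctx k (CApp E t) = CApp (liftMctx k E) (liftM k t)"
| "liftMctx k (CSucc E) = CSucc (liftMctx k E)"
| "liftMctx k (CNrec \<rho> r s E) = CNrec \<rho> (liftM k r) (liftM k s) (liftMctx k E)"

text \<open>Capture-avoiding substitution t[x:=r] of r for the lambda-variable with
index k (free variables above k are decremented, as the binder disappears).\<close>
fun substL :: "nat \<Rightarrow> trm \<Rightarrow> trm \<Rightarrow> trm" and substLC :: "nat \<Rightarrow> trm \<Rightarrow> cmd \<Rightarrow> cmd" where
  "substL k r (Var i) = (if i < k then Var i else if i = k then r else Var (i - 1))"
| "substL k r (Lam \<rho> t) = Lam \<rho> (substL (Suc k) (liftL 0 r) t)"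
| "substL k r (App t u) = App (substL k r t) (substL k r u)"
| "substL k r (Mu \<rho> c) = Mu \<rho> (substLC k (liftM 0 r) c)"
| "substL k r Zero = Zero"
| "substL k r (Succ t) = Succ (substL k r t)"
| "substL k r (Nrec \<rho> a b t) = Nrec \<rho> (substL k r a) (substL k r b) (substL k r t)"
| "substLC k r (Cmd a t) = Cmd a (substL k r t)"

text \<open>Structural substitution t[alpha:=alpha E] for the mu-variable with index k
(the only instance, beta = alpha, used by the reduction rules):
[alpha]u becomes [alpha]E[u[alpha:=alpha E]], homomorphic elsewhere.\<close>
fun ssubst :: "nat \<Rightarrow> ctx \<Rightarrow> trm \<Rightarrow> trm" and ssubstC :: "nat \<Rightarrow> ctx \<Rightarrow> cmd \<Rightarrow> cmd" where
  "ssubst k E (Var i) = Var i"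
| "ssubst k E (Lam \<rho> t) = Lam \<rho> (ssubst k (liftLctx 0 E) t)"
| "ssubst k E (App t u) = App (ssubst k E t) (ssubst k E u)"
| "ssubst k E (Mu \<rho> c) = Mu \<rho> (ssubstC (Suc k) (liftMctx 0 E) c)"
| "ssubst k E Zero = Zero"
| "ssubst k E (Succ t) = Succ (ssubst k E t)"
| "ssubst k E (Nrec \<rho> a b t) = Nrec \<rho> (ssubst k E a) (ssubst k E b) (ssubst k E t)"
| "ssubstC k E (Cmd a t) =
     (if a = k then Cmd a (fill E (ssubst k E t)) else Cmd a (ssubst k E t))"

text \<open>Result type annotation of the mu-abstraction after (mu alpha:rho.c) s reduces;
purely decorative.\<close>
fun cod :: "ty \<Rightarrow> ty" where
  "cod (Arr a b) = b"
| "cod N = N"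

inductive stepA :: "trm \<Rightarrow> trm \<Rightarrow> bool" and stepAC :: "cmd \<Rightarrow> cmd \<Rightarrow> bool" where
  beta: "stepA (App (Lam \<rho> t) r) (substL 0 r t)"
| muS: "stepA (Succ (Mu \<rho> c)) (Mu N (ssubstC 0 (CSucc Hole) c))"
| muApp: "stepA (App (Mu \<rho> c) s) (Mu (cod \<rho>) (ssubstC 0 (CApp Hole (liftM 0 s)) c))"
| nrec0: "stepA (Nrec \<rho> r s Zero) r"
| nrecS: "stepA (Nrec \<rho> r s (Succ (num n))) (App (App s (num n)) (Nrec \<rho> r s (num n)))"
| nrecMu: "stepA (Nrec \<rho> r s (Mu \<sigma> c))
            (Mu \<rho> (ssubstC 0 (CNrec \<rho> (liftM 0 r) (liftM 0 s) Hole) c))"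
| cLam: "stepA t t' \<Longrightarrow> stepA (Lam \<rho> t) (Lam \<rho> t')"
| cAppL: "stepA t t' \<Longrightarrow> stepA (App t u) (App t' u)"
| cAppR: "stepA u u' \<Longrightarrow> stepA (App t u) (App t u')"
| cMu: "stepAC c c' \<Longrightarrow> stepA (Mu \<rho> c) (Mu \<rho> c')"
| cSucc: "stepA t t' \<Longrightarrow> stepA (Succ t) (Succ t')"
| cNrec1: "stepA r r' \<Longrightarrow> stepA (Nrec \<rho> r s t) (Nrec \<rho> r' s t)"
| cNrec2: "stepA s s' \<Longrightarrow> stepA (Nrec \<rho> r s t) (Nrec \<rho> r s' t)"
| cNrec3: "stepA t t' \<Longrightarrow> stepA (Nrec \<rho> r s t) (Nrec \<rho> r s t')"
| cCmd: "stepA t t' \<Longrightarrow> stepAC (Cmd a t) (Cmd a t')"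

inductive SNA :: "trm \<Rightarrow> bool" where
  "(\<And>t'. stepA t t' \<Longrightarrow> SNA t') \<Longrightarrow> SNA t"

end

theory Submission
  imports Defs
begin

lemma num_Suc: "num (Suc n) = Succ (num n)"
  by (simp add: num_def)
lemma num_0: "num 0 = Zero"
  by (simp add: num_def)

lemma num_inj: "num m = num n \<Longrightarrow> m = n"
proof (induction m arbitrary: n)
  case 0 then show ?case by (cases n) (auto simp: num_0 num_Suc)
next
  case (Suc m) then show ?case by (cases n) (auto simp: num_0 num_Suc)
qed

lemma num_nf: "\<not> stepA (num n) t"
proof (induction n arbitrary: t)
  case 0 then show ?case by (auto simp: num_0 elim: stepA.cases)
next
  case (Suc n)
  have nm: "num n \<noteq> Mu x y" for x y by (cases n) (auto simp: num_0 num_Suc)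
  show ?case unfolding num_Suc
  proof
    assume "stepA (Succ (num n)) t"
    then show False
      by (cases rule: stepA.cases) (use Suc nm in auto)
  qed
qed

lemma fill_Nrec_num: "fill E (Nrec \<rho> a b c) \<noteq> num m"
proof (induction E arbitrary: m)
  case Hole then show ?case by (cases m) (auto simp: num_0 num_Suc)
next
  case (CApp E t) then show ?case by (cases m) (auto simp: num_0 num_Suc)
next
  case (CSucc E) then show ?case by (cases m) (auto simp: num_0 num_Suc)
next
  case (CNrec x1 x2 x3 E) then show ?case by (cases m) (auto simp: num_0 num_Suc)
qed

lemma fill_Nrec_not: "fill E (Nrec \<rho> a b c) \<noteq> Lam x y" "fill E (Nrec \<rho> a b c) \<noteq> Mu x z"
  "fill E (Nrec \<rho> a b c) \<noteq> Zero"
  by (cases E; simp)+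

lemma fill_step: "stepA u u' \<Longrightarrow> stepA (fill E u) (fill E u')"
  by (induction E) (auto intro: stepA_stepAC.intros)

lemma fill_step_inert:
  "stepA (fill E (Nrec \<rho> a b c)) t' \<Longrightarrow>
   (\<exists>u'. stepA (Nrec \<rho> a b c) u' \<and> t' = fill E u') \<or>
   (\<exists>E'. t' = fill E' (Nrec \<rho> a b c) \<and> (\<forall>v. stepA (fill E v) (fill E' v)))"
proof (induction E arbitrary: t')
  case Hole then show ?case by auto
next
  case (CApp E t)
  from CApp.prems show ?case
  proof (cases rule: stepA.cases)
    case (cAppL _ x)
    have "stepA (fill E (Nrec \<rho> a b c)) x" using cAppL by simp
    from CApp.IH[OF this] show ?thesis
    proof
      assume "\<exists>u'. stepA (Nrec \<rho> a b c) u' \<and> x = fill E u'"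
      then show ?thesis using cAppL by auto
    next
      assume "\<exists>E'. x = fill E' (Nrec \<rho> a b c) \<and> (\<forall>v. stepA (fill E v) (fill E' v))"
      then obtain E' where "x = fill E' (Nrec \<rho> a b c)" "\<forall>v. stepA (fill E v) (fill E' v)" by blast
      then show ?thesis using cAppL
        by (intro disjI2 exI[of _ "CApp E' t"]) (auto intro: stepA_stepAC.intros)
    qed
  next
    case (cAppR _ x)
    then show ?thesis
      by (intro disjI2 exI[of _ "CApp E x"]) (auto intro: stepA_stepAC.intros)
  qed (auto simp: fill_Nrec_not)
next
  case (CSucc E)
  from CSucc.prems show ?case
  proof (cases rule: stepA.cases)
    case (cSucc _ x)
    have "stepA (fill E (Nrec \<rho> a b c)) x" using cSucc by simp
    from CSucc.IH[OF this] show ?thesis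
    proof
      assume "\<exists>u'. stepA (Nrec \<rho> a b c) u' \<and> x = fill E u'"
      then show ?thesis using cSucc by auto
    next
      assume "\<exists>E'. x = fill E' (Nrec \<rho> a b c) \<and> (\<forall>v. stepA (fill E v) (fill E' v))"
      then obtain E' where "x = fill E' (Nrec \<rho> a b c)" "\<forall>v. stepA (fill E v) (fill E' v)" by blast
      then show ?thesis using cSucc
        by (intro disjI2 exI[of _ "CSucc E'"]) (auto intro: stepA_stepAC.intros)
    qed
  qed (auto simp: fill_Nrec_not)
next
  case (CNrec \<sigma> x y E)
  from CNrec.prems show ?case
  proof (cases rule: stepA.cases)
    case (nrecS _ _ _ n)
    then show ?thesis using fill_Nrec_num[of E \<rho> a b c "Suc n"] by (simp add: num_Suc)
  next
    case (cNrec3 _ z)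
    have "stepA (fill E (Nrec \<rho> a b c)) z" using cNrec3 by simp
    from CNrec.IH[OF this] show ?thesis
    proof
      assume "\<exists>u'. stepA (Nrec \<rho> a b c) u' \<and> z = fill E u'"
      then show ?thesis using cNrec3 by auto
    next
      assume "\<exists>E'. z = fill E' (Nrec \<rho> a b c) \<and> (\<forall>v. stepA (fill E v) (fill E' v))"
      then obtain E' where "z = fill E' (Nrec \<rho> a b c)" "\<forall>v. stepA (fill E v) (fill E' v)" by blast
      then show ?thesis using cNrec3
        by (intro disjI2 exI[of _ "CNrec \<sigma> x y E'"]) (auto intro: stepA_stepAC.intros)
    qed
  next
    case (cNrec1 _ z)
    then show ?thesis
      by (intro disjI2 exI[of _ "CNrec \<sigma> z y E"]) (auto intro: stepA_stepAC.intros)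
  next
    case (cNrec2 _ z)
    then show ?thesis
      by (intro disjI2 exI[of _ "CNrec \<sigma> x z E"]) (auto intro: stepA_stepAC.intros)
  qed (auto simp: fill_Nrec_not)
qed

lemma SNA_step: "SNA x \<Longrightarrow> stepA x y \<Longrightarrow> SNA y"
  by (auto elim: SNA.cases)

lemma SNA_steps: "stepA\<^sup>*\<^sup>* x y \<Longrightarrow> SNA x \<Longrightarrow> SNA y"
  by (induction rule: rtranclp_induct) (auto intro: SNA_step)

lemma SNA_induct_plus[consumes 1, case_names step]:
  assumes "SNA x"
    and step: "\<And>x. SNA x \<Longrightarrow> (\<And>y. stepA\<^sup>+\<^sup>+ x y \<Longrightarrow> P y) \<Longrightarrow> P x"
  shows "P x"
proof -
  have "\<forall>y. stepA\<^sup>*\<^sup>* x y \<longrightarrow> P y" using assms(1)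
  proof (induction rule: SNA.induct)
    case (1 t)
    have St: "SNA t" using 1(1) by (rule SNA.intros)
    show ?case
    proof (intro allI impI)
      fix y assume "stepA\<^sup>*\<^sup>* t y"
      then have "y = t \<or> (\<exists>t1. stepA t t1 \<and> stepA\<^sup>*\<^sup>* t1 y)"
        using converse_rtranclpE[of stepA t y] by blast
      then show "P y"
      proof
        assume base: "y = t"
        show ?thesis unfolding base
        proof (rule step[OF St])
          fix z assume "stepA\<^sup>+\<^sup>+ t z"
          then obtain t1 where "stepA t t1" "stepA\<^sup>*\<^sup>* t1 z"
            by (meson tranclpD)
          then show "P z" using 1(2) by blast
        qed
      next
        assume "\<exists>t1. stepA t t1 \<and> stepA\<^sup>*\<^sup>* t1 y"
        then show ?thesis using 1(2) by blast
      qed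
    qed
  qed
  then show ?thesis by blast
qed

lemma part1_inner:
  assumes "SNA x" "x = fill E r"
    and outer: "\<And>s' E r. stepA s s' \<Longrightarrow> SNA (fill E r) \<Longrightarrow> SNA (fill E (Nrec \<rho> r s' Zero))"
  shows "SNA (fill E (Nrec \<rho> r s Zero))"
  using assms(1,2)
proof (induction arbitrary: E r rule: SNA.induct)
  case (1 t)
  have St: "SNA t" using 1(1) by (rule SNA.intros)
  show ?case
  proof (rule SNA.intros)
    fix t' assume "stepA (fill E (Nrec \<rho> r s Zero)) t'"
    from fill_step_inert[OF this] show "SNA t'"
    proof
      assume "\<exists>u'. stepA (Nrec \<rho> r s Zero) u' \<and> t' = fill E u'"
      then obtain u' where u: "stepA (Nrec \<rho> r s Zero) u'" "t' = fill E u'" by blast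
      from u(1) show ?thesis
      proof (cases rule: stepA.cases)
        case nrec0 then show ?thesis using u St 1(3) by simp
      next
        case (cNrec1 r')
        have "stepA t (fill E r')" using 1(3) cNrec1 fill_step by simp
        then show ?thesis using 1(2) u cNrec1 by blast
      next
        case (cNrec2 s')
        then show ?thesis using outer St 1(3) u by simp
      next
        case (cNrec3 z) then show ?thesis using num_nf[of 0] by (simp add: num_0)
      qed
    next
      assume "\<exists>E'. t' = fill E' (Nrec \<rho> r s Zero) \<and> (\<forall>v. stepA (fill E v) (fill E' v))"
      then obtain E' where "t' = fill E' (Nrec \<rho> r s Zero)" "\<forall>v. stepA (fill E v) (fill E' v)" by blast
      then show ?thesis using 1(2)[of "fill E' r"] 1(3) by blast
    qed
  qed
qed

lemma part1: "SNA s \<Longrightarrow> SNA (fill E r) \<Longrightarrow> SNA (fill E (Nrec \<rho> r s Zero))"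
proof (induction s arbitrary: E r rule: SNA.induct)
  case (1 s)
  show ?case
    by (rule part1_inner[OF 1(3) refl]) (rule 1(2))
qed

lemma part2:
  assumes "SNA x"
  shows "x = fill E (App (App s (num n)) (Nrec \<rho> r s (num n))) \<Longrightarrow> SNA (fill E (Nrec \<rho> r s (Succ (num n))))"
  using assms
proof (induction x arbitrary: E r s rule: SNA_induct_plus)
  case (step x)
  show ?case
  proof (rule SNA.intros)
    fix t' assume "stepA (fill E (Nrec \<rho> r s (Succ (num n)))) t'"
    from fill_step_inert[OF this] show "SNA t'"
    proof
      assume "\<exists>u'. stepA (Nrec \<rho> r s (Succ (num n))) u' \<and> t' = fill E u'"
      then obtain u' where u: "stepA (Nrec \<rho> r s (Succ (num n))) u'" "t' = fill E u'" by blast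
      from u(1) show ?thesis
      proof (cases rule: stepA.cases)
        case (nrecS m)
        then have "m = n" using num_inj by simp
        then show ?thesis using nrecS u step by simp
      next
        case (cNrec1 r')
        have "stepA x (fill E (App (App s (num n)) (Nrec \<rho> r' s (num n))))"
          using step(3) cNrec1 by (auto intro!: fill_step intro: stepA_stepAC.intros)
        then show ?thesis using step(2) u cNrec1 by blast
      next
        case (cNrec2 s')
        have a: "stepA x (fill E (App (App s' (num n)) (Nrec \<rho> r s (num n))))"
          using step(3) cNrec2 by (auto intro!: fill_step intro: stepA_stepAC.intros)
        have b: "stepA (fill E (App (App s' (num n)) (Nrec \<rho> r s (num n))))
                  (fill E (App (App s' (num n)) (Nrec \<rho> r s' (num n))))"
          using cNrec2 by (auto intro!: fill_step intro: stepA_stepAC.intros)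
        have "stepA\<^sup>+\<^sup>+ x (fill E (App (App s' (num n)) (Nrec \<rho> r s' (num n))))"
          using a b by auto
        then show ?thesis using step(2) u cNrec2 by blast
      next
        case (cNrec3 z) then show ?thesis using num_nf[of "Suc n"] by (simp add: num_Suc)
      qed
    next
      assume "\<exists>E'. t' = fill E' (Nrec \<rho> r s (Succ (num n))) \<and> (\<forall>v. stepA (fill E v) (fill E' v))"
      then obtain E' where "t' = fill E' (Nrec \<rho> r s (Succ (num n)))" "\<forall>v. stepA (fill E v) (fill E' v)" by blast
      then show ?thesis using step(2)[of "fill E' (App (App s (num n)) (Nrec \<rho> r s (num n)))"] step(3) by blast
    qed
  qed
qed

theorem mainTheorem19:
  fixes E :: ctx and r s :: trm and n :: nat and \<rho> :: ty
  shows "(SNA (fill E r) \<and> SNA s \<longrightarrow> SNA (fill E (Nrec \<rho> r s Zero)))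
       \<and> (SNA (fill E (App (App s (num n)) (Nrec \<rho> r s (num n))))
            \<longrightarrow> SNA (fill E (Nrec \<rho> r s (Succ (num n)))))"
  using part1 part2 by blast

end
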